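(* Let $G=(V,E)$ be a graph, $c\ge1$, $\epsilon\in[0,1/3)$, let $\kappa(G)=(V,\kappa(E))$ be an $(\epsilon,c)$-kernel of $G$ with tight nodes $\kappa_T(V)$, and let $M$ be a matching in $\kappa(G)$ such that every augmenting path in $\kappa(G)$ with respect to $M$ has length at least five. Let $F_T$ be the set of tight nodes unmatched in $M$. Then $|F_T|\le(1+3\epsilon)|M|$.
   Context: Let $\mathcal N_v$ denote the set of neighbors of $v$ in $G$. A subgraph $\kappa(G)=(V,\kappa(E))$ with $\kappa(E)\subseteq E$ is given, together with a partition of $V$ into tight nodes $\kappa_T(V)$ and slack nodes $\kappa_S(V)$. For $v\in V$ let $\kappa(\mathcal N_v)=\{u\in\mathcal N_v:(u,v)\in\kappa(E)\}$ (the friends of $v$). For $c\ge1$ and $\epsilon\in[0,1/3)$, $\kappa(G)$ is an $(\epsilon,c)$-kernel of $G$ (w.r.t. this partition) iff: (i) $|\kappa(\mathcal N_v)|\le(1+\epsilon)c$ for all $v\in V$; (ii) $|\kappa(\mathcal N_v)|\ge(1-\epsilon)c$ for all $v\in\kappa_T(V)$; (iii) for all $u,v\in\kappa_S(V)$, if $(u,v)\in E$ then $(u,v)\in\kappa(E)$. Given a matching $M$ in a graph $H$, an augmenting path of length $2k+1$ ($k \ge 0$) is a simple path in $H$ with $2k+1$ edges whose two end nodes are unmatched in $M$ and whose edges alternate between non-$M$ and $M$ edges (first and last edges not in $M$). *)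

theory Defs
  imports Complex_Main
begin

definition graph :: "'a set \<Rightarrow> 'a set set \<Rightarrow> bool" where
  "graph V E \<longleftrightarrow> finite V \<and> (\<forall>e\<in>E. \<exists>u v. e = {u, v} \<and> u \<noteq> v \<and> u \<in> V \<and> v \<in> V)"

definition friends :: "'a set set \<Rightarrow> 'a \<Rightarrow> 'a set" where
  "friends KE v = {u. {u, v} \<in> KE}"

(* (eps,c)-kernel of G=(V,E) with edge set KE, tight nodes T and slack nodes S *)
definition is_kernel ::
  "'a set \<Rightarrow> 'a set set \<Rightarrow> 'a set set \<Rightarrow> 'a set \<Rightarrow> 'a set \<Rightarrow> real \<Rightarrow> real \<Rightarrow> bool" where
  "is_kernel V E KE T S eps c \<longleftrightarrow>
     KE \<subseteq> E \<and> T \<union> S = V \<and> T \<inter> S = {} \<and>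
     (\<forall>v\<in>V. real (card (friends KE v)) \<le> (1 + eps) * c) \<and>
     (\<forall>v\<in>T. real (card (friends KE v)) \<ge> (1 - eps) * c) \<and>
     (\<forall>u\<in>S. \<forall>v\<in>S. {u, v} \<in> E \<longrightarrow> {u, v} \<in> KE)"

definition matching :: "'a set set \<Rightarrow> 'a set set \<Rightarrow> bool" where
  "matching H M \<longleftrightarrow> M \<subseteq> H \<and> (\<forall>e1\<in>M. \<forall>e2\<in>M. e1 \<noteq> e2 \<longrightarrow> e1 \<inter> e2 = {})"

definition matched :: "'a set set \<Rightarrow> 'a \<Rightarrow> bool" where
  "matched M v \<longleftrightarrow> (\<exists>e\<in>M. v \<in> e)"

(* augmenting path in the graph with edge set H w.r.t. M, given as its vertex list;
   it has length (number of edges) length p - 1 *)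
definition augmenting_path :: "'a set set \<Rightarrow> 'a set set \<Rightarrow> 'a list \<Rightarrow> bool" where
  "augmenting_path H M p \<longleftrightarrow>
     distinct p \<and> odd (length p - 1) \<and>
     (\<forall>i. Suc i < length p \<longrightarrow> {p ! i, p ! Suc i} \<in> H \<and>
            ({p ! i, p ! Suc i} \<in> M \<longleftrightarrow> odd i)) \<and>
     \<not> matched M (hd p) \<and> \<not> matched M (last p)"

end

theory Submission
  imports Defs
begin

theorem lemma3p14:
  fixes V :: "'a set" and E KE M :: "'a set set" and T S :: "'a set"
    and eps c :: real
  assumes "graph V E"
    and "c \<ge> 1" and "0 \<le> eps" and "eps < 1/3"
    and "is_kernel V E KE T S eps c"
    and "matching KE M"
    and "\<forall>p. augmenting_path KE M p \<longrightarrow> length p - 1 \<ge> 5"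
  shows "real (card {v \<in> T. \<not> matched M v}) \<le> (1 + 3 * eps) * real (card M)"
proof -
  define F where "F = {v \<in> T. \<not> matched M v}"
  define fr where "fr = friends KE"
  have finV: "finite V" using assms(1) by (simp add: graph_def)
  have KEE: "KE \<subseteq> E" and TV: "T \<subseteq> V"
    and up: "\<And>v. v \<in> V \<Longrightarrow> real (card (fr v)) \<le> (1 + eps) * c"
    and lo: "\<And>v. v \<in> T \<Longrightarrow> real (card (fr v)) \<ge> (1 - eps) * c"
    using assms(5) unfolding is_kernel_def fr_def by auto
  have MKE: "M \<subseteq> KE" and Mdisj: "\<And>e1 e2. e1 \<in> M \<Longrightarrow> e2 \<in> M \<Longrightarrow> e1 \<noteq> e2 \<Longrightarrow> e1 \<inter> e2 = {}"
    using assms(6) unfolding matching_def by auto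
  have edge: "\<And>x y. {x, y} \<in> KE \<Longrightarrow> x \<noteq> y \<and> x \<in> V \<and> y \<in> V"
  proof -
    fix x y assume "{x, y} \<in> KE"
    then have "{x,y} \<in> E" using KEE by auto
    then obtain u v where "{x,y} = {u,v}" "u \<noteq> v" "u \<in> V" "v \<in> V"
      using assms(1) unfolding graph_def by blast
    then show "x \<noteq> y \<and> x \<in> V \<and> y \<in> V" by (metis doubleton_eq_iff insert_absorb2)
  qed
  have frV: "\<And>v. fr v \<subseteq> V"
  proof
    fix v x assume "x \<in> fr v"
    then have "{x, v} \<in> KE" unfolding fr_def friends_def by simp
    then show "x \<in> V" using edge[of x v] by simp
  qed
  have finfr: "\<And>v. finite (fr v)" using finite_subset[OF frV finV] .
  have "F \<subseteq> T" unfolding F_def by auto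
  then have finF: "finite F" using finite_subset[OF _ finite_subset[OF TV finV]] by blast
  have finKE: "finite KE"
  proof -
    have "KE \<subseteq> Pow V"
    proof
      fix e assume "e \<in> KE"
      then have "e \<in> E" using KEE by blast
      then obtain u v where "e = {u, v}" "u \<in> V" "v \<in> V"
        using assms(1) unfolding graph_def by blast
      then show "e \<in> Pow V" by simp
    qed
    then show ?thesis using finite_subset finV finite_Pow_iff by blast
  qed
  have finM: "finite M" using finite_subset[OF MKE finKE] .
  have noaug: "\<And>p. augmenting_path KE M p \<Longrightarrow> length p - 1 \<ge> 5" using assms(7) by auto
  have path1: "matched M w" if a: "a \<in> F" and w: "w \<in> fr a" for a w
  proof (rule ccontr)
    assume nm: "\<not> matched M w"
    have kw: "{a, w} \<in> KE" using w unfolding fr_def friends_def by (simp add: insert_commute)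
    have am: "\<not> matched M a" using a unfolding F_def by auto
    have aM: "{a,w} \<notin> M" using am unfolding matched_def by auto
    have "augmenting_path KE M [a, w]"
      unfolding augmenting_path_def using edge[OF kw] kw aM am nm
      by (auto simp: less_Suc_eq)
    then show False using noaug by fastforce
  qed
  have path3: "a = b" if a: "a \<in> F" and b: "b \<in> F" and e: "{u, v} \<in> M"
    and au: "a \<in> fr u" and bv: "b \<in> fr v" for a b u v
  proof (rule ccontr)
    assume ab: "a \<noteq> b"
    have k1: "{a, u} \<in> KE" using au unfolding fr_def friends_def by (simp add: insert_commute)
    have k3: "{v, b} \<in> KE" using bv unfolding fr_def friends_def by (simp add: insert_commute)
    have k2: "{u, v} \<in> KE" using e MKE by auto
    have am: "\<not> matched M a" "\<not> matched M b" using a b unfolding F_def by auto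
    have um: "matched M u" "matched M v" using e unfolding matched_def by auto
    have n1: "{a,u} \<notin> M" "{v,b} \<notin> M" using am unfolding matched_def by auto
    have d: "a \<noteq> u" "a \<noteq> v" "b \<noteq> u" "b \<noteq> v" using am um by auto
    have "augmenting_path KE M [a, u, v, b]"
      unfolding augmenting_path_def using edge[OF k2] k1 k2 k3 n1 e am d ab
      by (auto simp: less_Suc_eq nth_Cons split: nat.splits)
    then show False using noaug by fastforce
  qed
  define P where "P = Sigma F fr"
  define Pe where "Pe = (\<lambda>e. {p \<in> P. snd p \<in> e})"
  have cardP: "card P = (\<Sum>a\<in>F. card (fr a))"
    unfolding P_def using finF finfr by (simp add: card_SigmaI)
  have finP: "finite P" unfolding P_def using finF finfr by auto
  have PU: "P = (\<Union>e\<in>M. Pe e)"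
    unfolding Pe_def P_def using path1 unfolding matched_def by auto
  have cardP2: "card P = (\<Sum>e\<in>M. card (Pe e))"
  proof -
    have "card (\<Union>e\<in>M. Pe e) = (\<Sum>e\<in>M. card (Pe e))"
      apply (rule card_UN_disjoint[OF finM])
      using finP unfolding Pe_def apply auto[1]
      using Mdisj unfolding Pe_def by blast
    then show ?thesis using PU by simp
  qed
  have bnd: "real (card (Pe e)) \<le> (1 + eps) * c" if e: "e \<in> M" for e
  proof -
    obtain u v where euv: "e = {u, v}" and uv: "u \<noteq> v" and uV: "u \<in> V" and vV: "v \<in> V"
      using e MKE edge by (metis in_mono assms(1) KEE graph_def)
    define Au where "Au = fr u \<inter> F"
    define Av where "Av = fr v \<inter> F"
    have sub: "Pe e \<subseteq> (Au \<times> {u}) \<union> (Av \<times> {v})"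
      unfolding Pe_def P_def Au_def Av_def euv fr_def friends_def
      by (auto simp: insert_commute)
    have finA: "finite Au" "finite Av" unfolding Au_def Av_def using finfr by auto
    show ?thesis
    proof (cases "Av = {}")
      case True
      then have "Pe e \<subseteq> Au \<times> {u}" using sub by auto
      then have "card (Pe e) \<le> card (Au \<times> {u})" using finA by (intro card_mono) auto
      also have "\<dots> = card Au" by (simp add: card_cartesian_product)
      also have "\<dots> \<le> card (fr u)" unfolding Au_def using finfr by (intro card_mono) auto
      finally show ?thesis using up[OF uV] by linarith
    next
      case nv: False
      show ?thesis
      proof (cases "Au = {}")
        case True
        then have "Pe e \<subseteq> Av \<times> {v}" using sub by auto
        then have "card (Pe e) \<le> card (Av \<times> {v})" using finA by (intro card_mono) auto
        also have "\<dots> = card Av" by (simp add: card_cartesian_product)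
        also have "\<dots> \<le> card (fr v)" unfolding Av_def using finfr by (intro card_mono) auto
        finally show ?thesis using up[OF vV] by linarith
      next
        case False
        obtain a where aAu: "a \<in> Au" using False by auto
        have all: "\<And>x y. x \<in> Au \<Longrightarrow> y \<in> Av \<Longrightarrow> x = y"
          using path3 e euv unfolding Au_def Av_def by blast
        have Au1: "Au = {a}" using all aAu nv by blast
        have Av1: "Av = {a}" using all aAu nv by blast
        have "Pe e \<subseteq> {(a,u),(a,v)}" using sub Au1 Av1 by auto
        then have "card (Pe e) \<le> card {(a,u),(a,v)}" by (intro card_mono) auto
        also have "\<dots> \<le> 2" by (simp add: card_insert_le_m1)
        also have "2 = card {a, v}"
        proof -
          have "{a, u} \<in> KE" using aAu unfolding Au_def fr_def friends_def by simp
          moreover have "{u, v} \<in> M" using e euv by simp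
          ultimately have "a \<noteq> v" using aAu unfolding Au_def F_def matched_def by blast
          then show ?thesis by simp
        qed
        also have "\<dots> \<le> card (fr u)"
        proof (rule card_mono[OF finfr])
          have "v \<in> fr u" using e euv MKE unfolding fr_def friends_def by (auto simp: insert_commute)
          then show "{a, v} \<subseteq> fr u" using aAu unfolding Au_def by auto
        qed
        finally show ?thesis using up[OF uV] by linarith
      qed
    qed
  qed
  have "real (card F) * ((1 - eps) * c) = (\<Sum>a\<in>F. (1 - eps) * c)" by simp
  also have "\<dots> \<le> (\<Sum>a\<in>F. real (card (fr a)))"
    by (rule sum_mono) (use lo F_def in auto)
  also have "\<dots> = real (card P)" using cardP by simp
  also have "\<dots> = (\<Sum>e\<in>M. real (card (Pe e)))" using cardP2 by simp
  also have "\<dots> \<le> (\<Sum>e\<in>M. (1 + eps) * c)" by (rule sum_mono) (use bnd in auto)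
  also have "\<dots> = real (card M) * ((1 + eps) * c)" by simp
  finally have ineq: "real (card F) * (1 - eps) * c \<le> real (card M) * (1 + eps) * c"
    by (simp add: mult.assoc)
  have c0: "c > 0" using assms(2) by linarith
  have i2: "real (card F) * (1 - eps) \<le> real (card M) * (1 + eps)"
    using ineq c0 by (meson mult_le_cancel_right_pos)
  have "real (card M) * (1 + eps) \<le> real (card M) * ((1 + 3*eps) * (1 - eps))"
  proof (rule mult_left_mono)
    have "eps * (3 * eps) \<le> eps * 1" by (rule mult_left_mono) (use assms(3,4) in auto)
    then show "1 + eps \<le> (1 + 3*eps) * (1 - eps)" by (simp add: algebra_simps)
  qed simp
  then have "real (card F) * (1 - eps) \<le> (1 + 3*eps) * real (card M) * (1 - eps)"
    using i2 by (simp add: algebra_simps)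
  then have "real (card F) \<le> (1 + 3*eps) * real (card M)"
    using assms(4) by (simp add: mult_le_cancel_right)
  then show ?thesis unfolding F_def .
qed

end
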